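(* Let $L_1$ and $L_2$ be distinct lines in the plane meeting at a point ${\bf a}$. Let $2\theta$ be the measure of the smaller angle between the two lines, and let $\phi$ be the angle between the line through ${\bf a}$ parallel to the $x$-axis and the line bisecting the smaller angle between $L_1$ and $L_2$. Then the subset of $\mathbb{R}^3$ generated by $L_1,L_2$ is the HR-cone $(R_\phi\Lambda_\theta R_{-\phi},{\bf a})$, i.e. the set of $(x,y,z)$ with $z^2=({\bf x}-{\bf a})^TR_\phi\Lambda_\theta R_{-\phi}({\bf x}-{\bf a})$, ${\bf x}=(x,y)^T$.
   Context: For distinct lines $L_1,L_2$ in the plane, the subset of $\mathbb{R}^3$ generated by them is the set of all points $(x,y,\pm z)$ such that $2z$ is the length of a line segment with one endpoint on $L_1$, the other on $L_2$, and midpoint $(x,y)$. For real $\phi$ and $0<\theta<\pi/2$: $R_\phi=\begin{bmatrix}\cos\phi&-\sin\phi\\ \sin\phi&\cos\phi\end{bmatrix}$ and $\Lambda_\theta=\begin{bmatrix}\tan^2\theta&0\\0&\cot^2\theta\end{bmatrix}$. For a symmetric positive definite $2\times2$ matrix $A$ with $\det A=1$ and ${\bf a}\in\mathbb{R}^2$, the HR-cone $(A,{\bf a})$ is $\{(x,y,z): z^2=({\bf x}-{\bf a})^TA({\bf x}-{\bf a})\}$. *)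

theory Defs
  imports "HOL-Analysis.Analysis"
begin

definition line_through :: "real^2 \<Rightarrow> real \<Rightarrow> (real^2) set" where
  "line_through a \<alpha> = {a + t *\<^sub>R vector [cos \<alpha>, sin \<alpha>] | t. True}"

definition generated_set :: "(real^2) set \<Rightarrow> (real^2) set \<Rightarrow> (real \<times> real \<times> real) set" where
  "generated_set L1 L2 =
     {(x, y, z). \<exists>p\<in>L1. \<exists>q\<in>L2. vector [x, y] = midpoint p q \<and> 2 * \<bar>z\<bar> = dist p q}"

definition rot :: "real \<Rightarrow> real^2^2" where
  "rot \<phi> = vector [vector [cos \<phi>, - sin \<phi>], vector [sin \<phi>, cos \<phi>]]"

definition Lam :: "real \<Rightarrow> real^2^2" where
  "Lam \<theta> = vector [vector [(tan \<theta>)\<^sup>2, 0], vector [0, (cot \<theta>)\<^sup>2]]"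

definition hr_cone :: "real^2^2 \<Rightarrow> real^2 \<Rightarrow> (real \<times> real \<times> real) set" where
  "hr_cone A a = {(x, y, z). z\<^sup>2 = (vector [x, y] - a) \<bullet> (A *v (vector [x, y] - a))}"

end

theory Submission
  imports Defs
begin

lemma quad_eq:
  "(v::real^2) \<bullet> ((rot \<phi> ** Lam \<theta> ** rot (- \<phi>)) *v v) =
   (tan \<theta>)\<^sup>2 * (cos \<phi> * v$1 + sin \<phi> * v$2)\<^sup>2 + (cot \<theta>)\<^sup>2 * (- sin \<phi> * v$1 + cos \<phi> * v$2)\<^sup>2"
  by (simp add: rot_def Lam_def inner_vec_def matrix_vector_mult_def matrix_matrix_mult_def sum_2 power2_eq_square algebra_simps)

lemma dist2: "(dist (p::real^2) q)\<^sup>2 = (p$1 - q$1)\<^sup>2 + (p$2 - q$2)\<^sup>2"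
  by (simp only: dist_norm power2_norm_eq_inner) (simp add: inner_vec_def sum_2 power2_eq_square)

lemma vec2_eq: "(vector [x, y] = (v::real^2)) \<longleftrightarrow> x = v$1 \<and> y = v$2"
  by (auto simp: vec_eq_iff forall_2)

lemma line_mem: "p \<in> line_through a \<alpha> \<longleftrightarrow> (\<exists>s. p$1 = a$1 + s * cos \<alpha> \<and> p$2 = a$2 + s * sin \<alpha>)"
proof
  assume "p \<in> line_through a \<alpha>" then show "\<exists>s. p$1 = a$1 + s * cos \<alpha> \<and> p$2 = a$2 + s * sin \<alpha>"
    by (auto simp: line_through_def)
next
  assume "\<exists>s. p$1 = a$1 + s * cos \<alpha> \<and> p$2 = a$2 + s * sin \<alpha>"
  then obtain s where "p$1 = a$1 + s * cos \<alpha>" "p$2 = a$2 + s * sin \<alpha>" by blast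
  then have "p = a + s *\<^sub>R vector [cos \<alpha>, sin \<alpha>]" by (simp add: vec_eq_iff forall_2)
  then show "p \<in> line_through a \<alpha>" by (auto simp: line_through_def)
qed

lemma gen_sym: "generated_set L1 L2 = generated_set L2 L1"
  unfolding generated_set_def by (auto, metis midpoint_sym dist_commute, metis midpoint_sym dist_commute)

lemma rot_coords:
  fixes cp sn c S s t dx dy :: real
  assumes "cp\<^sup>2 + sn\<^sup>2 = 1"
    and "dx = ((s+t)*c*cp - (s-t)* S* sn)/2" and "dy = ((s+t)*c* sn + (s-t)* S*cp)/2"
  shows "cp*dx + sn*dy = (s+t)*c/2" "- sn*dx + cp*dy = (s-t)* S/2"
proof -
  have "cp*dx + sn*dy = (s+t)*c*(cp\<^sup>2 + sn\<^sup>2)/2" unfolding assms(2,3) by (simp add: field_simps power2_eq_square)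
  then show "cp*dx + sn*dy = (s+t)*c/2" using assms(1) by simp
  have "- sn*dx + cp*dy = (s-t)* S*(cp\<^sup>2 + sn\<^sup>2)/2" unfolding assms(2,3) by (simp add: field_simps power2_eq_square)
  then show "- sn*dx + cp*dy = (s-t)* S/2" using assms(1) by simp
qed

lemma pq_facts:
  fixes p q a :: "real^2"
  assumes "p$1 = a$1 + s * cos (\<phi>+\<theta>)" "p$2 = a$2 + s * sin (\<phi>+\<theta>)"
    "q$1 = a$1 + t * cos (\<phi>-\<theta>)" "q$2 = a$2 + t * sin (\<phi>-\<theta>)"
  shows "(midpoint p q)$1 - a$1 = ((s+t)*cos \<theta>*cos \<phi> - (s-t)* sin \<theta> * sin \<phi>)/2"
    "(midpoint p q)$2 - a$2 = ((s+t)*cos \<theta>* sin \<phi> + (s-t)* sin \<theta> * cos \<phi>)/2"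
    "(dist p q)\<^sup>2 = (s-t)\<^sup>2 * (cos \<theta>)\<^sup>2 + (s+t)\<^sup>2 * (sin \<theta>)\<^sup>2"
proof -
  show "(midpoint p q)$1 - a$1 = ((s+t)*cos \<theta>*cos \<phi> - (s-t)* sin \<theta> * sin \<phi>)/2"
    using assms by (simp add: midpoint_def cos_add cos_diff algebra_simps)
  show "(midpoint p q)$2 - a$2 = ((s+t)*cos \<theta>* sin \<phi> + (s-t)* sin \<theta> * cos \<phi>)/2"
    using assms by (simp add: midpoint_def sin_add sin_diff algebra_simps)
  have e: "(dist p q)\<^sup>2 = ((s-t)*cos \<theta>*cos \<phi> - (s+t)* sin \<theta> * sin \<phi>)\<^sup>2 + ((s-t)*cos \<theta>* sin \<phi> + (s+t)* sin \<theta> * cos \<phi>)\<^sup>2"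
    unfolding dist2 assms by (simp add: sin_add sin_diff cos_add cos_diff algebra_simps)
  have "... = ((s-t)\<^sup>2 * (cos \<theta>)\<^sup>2 + (s+t)\<^sup>2 * (sin \<theta>)\<^sup>2) * ((sin \<phi>)\<^sup>2 + (cos \<phi>)\<^sup>2)"
    by algebra
  then show "(dist p q)\<^sup>2 = (s-t)\<^sup>2 * (cos \<theta>)\<^sup>2 + (s+t)\<^sup>2 * (sin \<theta>)\<^sup>2" using e by (metis sin_cos_squared_add mult_1_right)
qed

lemma main:
  fixes a :: "real^2" and \<theta> \<phi> :: real
  assumes "0 < \<theta>" and "2 * \<theta> \<le> pi / 2"
  shows "generated_set (line_through a (\<phi> + \<theta>)) (line_through a (\<phi> - \<theta>)) = hr_cone (rot \<phi> ** Lam \<theta> ** rot (- \<phi>)) a"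
proof -
  define c where "c = cos \<theta>"
  define S where "S = sin \<theta>"
  define cp where "cp = cos \<phi>"
  define sn where "sn = sin \<phi>"
  have c0: "c > 0" unfolding c_def using assms by (intro cos_gt_zero) auto
  have S0: "S > 0" unfolding S_def using assms by (intro sin_gt_zero) auto
  have tn: "tan \<theta> = S / c" unfolding S_def c_def tan_def ..
  have ct: "cot \<theta> = c / S" unfolding S_def c_def cot_def ..
  have pyth: "cp\<^sup>2 + sn\<^sup>2 = 1" unfolding cp_def sn_def by simp
  show ?thesis
  proof (rule set_eqI)
    fix X :: "real \<times> real \<times> real"
    obtain x y z where X: "X = (x, y, z)" by (cases X) auto
    define dx where "dx = x - a$1"
    define dy where "dy = y - a$2"
    have H: "X \<in> hr_cone (rot \<phi> ** Lam \<theta> ** rot (- \<phi>)) a \<longleftrightarrow>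
       z\<^sup>2 = (S/c)\<^sup>2 * (cp * dx + sn * dy)\<^sup>2 + (c/S)\<^sup>2 * (- sn * dx + cp * dy)\<^sup>2"
      unfolding X hr_cone_def by (simp add: quad_eq tn ct dx_def dy_def cp_def sn_def)
    show "X \<in> generated_set (line_through a (\<phi> + \<theta>)) (line_through a (\<phi> - \<theta>)) \<longleftrightarrow>
       X \<in> hr_cone (rot \<phi> ** Lam \<theta> ** rot (- \<phi>)) a"
    proof
      assume "X \<in> generated_set (line_through a (\<phi> + \<theta>)) (line_through a (\<phi> - \<theta>))"
      then obtain p q where p: "p \<in> line_through a (\<phi> + \<theta>)" and q: "q \<in> line_through a (\<phi> - \<theta>)"
        and m: "vector [x, y] = midpoint p q" and d: "2 * \<bar>z\<bar> = dist p q"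
        unfolding X generated_set_def by blast
      obtain s where s: "p$1 = a$1 + s * cos (\<phi>+\<theta>)" "p$2 = a$2 + s * sin (\<phi>+\<theta>)"
        using p line_mem by blast
      obtain t where t: "q$1 = a$1 + t * cos (\<phi>-\<theta>)" "q$2 = a$2 + t * sin (\<phi>-\<theta>)"
        using q line_mem by blast
      note f = pq_facts[OF s t]
      have dx: "dx = ((s+t)*c*cp - (s-t)* S* sn)/2"
        using f(1) m unfolding vec2_eq dx_def c_def S_def cp_def sn_def by simp
      have dy: "dy = ((s+t)*c* sn + (s-t)* S*cp)/2"
        using f(2) m unfolding vec2_eq dy_def c_def S_def cp_def sn_def by simp
      note r = rot_coords[OF pyth dx dy]
      have "4 * z\<^sup>2 = (2 * \<bar>z\<bar>)\<^sup>2" by (simp add: power2_eq_square)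
      also have "... = (s-t)\<^sup>2 * c\<^sup>2 + (s+t)\<^sup>2 * S\<^sup>2" using d f(3) c_def S_def by simp
      finally have z: "4 * z\<^sup>2 = (s-t)\<^sup>2 * c\<^sup>2 + (s+t)\<^sup>2 * S\<^sup>2" .
      show "X \<in> hr_cone (rot \<phi> ** Lam \<theta> ** rot (- \<phi>)) a"
      proof -
        have rhs: "(S/c)\<^sup>2 * ((s+t)*c/2)\<^sup>2 + (c/S)\<^sup>2 * ((s-t)*S/2)\<^sup>2 = ((s-t)\<^sup>2 * c\<^sup>2 + (s+t)\<^sup>2 * S\<^sup>2) / 4"
          using c0 S0 by (simp add: field_simps power2_eq_square)
        show ?thesis unfolding H r rhs using z by simp
      qed
    next
      assume "X \<in> hr_cone (rot \<phi> ** Lam \<theta> ** rot (- \<phi>)) a"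
      then have zq: "z\<^sup>2 = (S/c)\<^sup>2 * (cp * dx + sn * dy)\<^sup>2 + (c/S)\<^sup>2 * (- sn * dx + cp * dy)\<^sup>2"
        using H by blast
      define w1 where "w1 = cp * dx + sn * dy"
      define w2 where "w2 = - sn * dx + cp * dy"
      define s where "s = w1 / c + w2 / S"
      define t where "t = w1 / c - w2 / S"
      define p :: "real^2" where "p = vector [a$1 + s * cos (\<phi>+\<theta>), a$2 + s * sin (\<phi>+\<theta>)]"
      define q :: "real^2" where "q = vector [a$1 + t * cos (\<phi>-\<theta>), a$2 + t * sin (\<phi>-\<theta>)]"
      have ps: "p$1 = a$1 + s * cos (\<phi>+\<theta>)" "p$2 = a$2 + s * sin (\<phi>+\<theta>)" unfolding p_def by simp_all
      have qt: "q$1 = a$1 + t * cos (\<phi>-\<theta>)" "q$2 = a$2 + t * sin (\<phi>-\<theta>)" unfolding q_def by simp_all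
      note f = pq_facts[OF ps qt]
      have pl: "p \<in> line_through a (\<phi> + \<theta>)" using ps line_mem by blast
      have ql: "q \<in> line_through a (\<phi> - \<theta>)" using qt line_mem by blast
      have st1: "(s+t)*c = 2*w1" unfolding s_def t_def using c0 by (simp add: field_simps)
      have st2: "(s-t)*S = 2*w2" unfolding s_def t_def using S0 by (simp add: field_simps)
      have "w1 * cp - w2 * sn = dx * (cp\<^sup>2 + sn\<^sup>2)" unfolding w1_def w2_def by (simp add: algebra_simps power2_eq_square)
      then have ex: "w1 * cp - w2 * sn = dx" using pyth by simp
      have "w1 * sn + w2 * cp = dy * (cp\<^sup>2 + sn\<^sup>2)" unfolding w1_def w2_def by (simp add: algebra_simps power2_eq_square)
      then have ey: "w1 * sn + w2 * cp = dy" using pyth by simp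
      have m1: "(midpoint p q)$1 = x"
      proof -
        have "(midpoint p q)$1 - a$1 = ((s+t)*c*cp - (s-t)* S* sn)/2" using f(1) c_def S_def cp_def sn_def by simp
        also have "... = w1 * cp - w2 * sn" using st1 st2 by (simp add: field_simps)
        finally show ?thesis using ex dx_def by simp
      qed
      have m2: "(midpoint p q)$2 = y"
      proof -
        have "(midpoint p q)$2 - a$2 = ((s+t)*c* sn + (s-t)* S*cp)/2" using f(2) c_def S_def cp_def sn_def by simp
        also have "... = w1 * sn + w2 * cp" using st1 st2 by (simp add: field_simps)
        finally show ?thesis using ey dy_def by simp
      qed
      have "(dist p q)\<^sup>2 = ((s-t)*S)\<^sup>2 * (c/S)\<^sup>2 + ((s+t)*c)\<^sup>2 * (S/c)\<^sup>2"
      proof -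
        have "((s-t)*S)\<^sup>2 * (c/S)\<^sup>2 + ((s+t)*c)\<^sup>2 * (S/c)\<^sup>2 = (s-t)\<^sup>2 * c\<^sup>2 + (s+t)\<^sup>2 * S\<^sup>2"
          using c0 S0 by (simp add: field_simps power2_eq_square)
        then show ?thesis using f(3) c_def S_def by simp
      qed
      also have "... = 4 * z\<^sup>2" unfolding st1 st2 zq w1_def[symmetric] w2_def[symmetric]
        by (simp add: algebra_simps power2_eq_square)
      also have "... = (2 * \<bar>z\<bar>)\<^sup>2" by (simp add: power2_eq_square)
      finally have "dist p q = 2 * \<bar>z\<bar>"
        by (metis abs_of_nonneg zero_le_dist power2_eq_iff_nonneg abs_ge_zero mult_nonneg_nonneg zero_le_numeral)
      then show "X \<in> generated_set (line_through a (\<phi> + \<theta>)) (line_through a (\<phi> - \<theta>))"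
        unfolding X generated_set_def using pl ql m1 m2 vec2_eq by fastforce
    qed
  qed
qed

theorem theorem3p3:
  fixes L1 L2 :: "(real^2) set" and a :: "real^2" and \<theta> \<phi> :: real
  assumes "0 < \<theta>" and "2 * \<theta> \<le> pi / 2"
    and "{L1, L2} = {line_through a (\<phi> + \<theta>), line_through a (\<phi> - \<theta>)}"
  shows "generated_set L1 L2 = hr_cone (rot \<phi> ** Lam \<theta> ** rot (- \<phi>)) a"
proof -
  from assms(3) have "(L1 = line_through a (\<phi> + \<theta>) \<and> L2 = line_through a (\<phi> - \<theta>)) \<or>
      (L1 = line_through a (\<phi> - \<theta>) \<and> L2 = line_through a (\<phi> + \<theta>))"
    by (auto simp: doubleton_eq_iff)
  then show ?thesis using main[OF assms(1,2)] gen_sym by metis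
qed

end
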